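(* Let $m$ be a positive integer, $M=\{1,\ldots,m\}$, and let $Y\subseteq\mathbb{R}^m$. If the free disposal hull $Y+\mathbb{R}^m_{\geq 0}$ of $Y$ is convex, then the following are equivalent: $(\alpha)$ $\mathrm{WM}\,Y=\mathrm{M}\,Y$; $(\beta)$ $\displaystyle\bigcup_{\emptyset\neq I\subseteq M}\mathrm{M}_I Y\subseteq \mathrm{M}\,Y$.
   Context: Let $M=\{1,\ldots,m\}$. For a nonempty $I\subseteq M$ and $y=(y_1,\ldots,y_m),y'=(y'_1,\ldots,y'_m)\in\mathbb{R}^m$: $y\leq_I y'$ means $y_i\leq y'_i$ for all $i\in I$; $y<_I y'$ means $y_i<y'_i$ for all $i\in I$; $y\lneq_I y'$ means $y_i\leq y'_i$ for all $i\in I$ and $y_j<y'_j$ for some $j\in I$. For $Y\subseteq\mathbb{R}^m$, $\mathrm{M}_I Y$ (resp. $\mathrm{WM}_I Y$) is the set of all $y'\in Y$ for which there is no $y\in Y$ with $y\lneq_I y'$ (resp. $y<_I y'$). Set $\mathrm{M}\,Y=\mathrm{M}_M Y$ (efficient set) and $\mathrm{WM}\,Y=\mathrm{WM}_M Y$ (weakly efficient set). $\mathbb{R}^m_{\geq0}=\{(y_1,\ldots,y_m)\in\mathbb{R}^m: y_i\ge 0\ \forall i\}$, and the free disposal hull of $Z\subseteq\mathbb{R}^m$ is $Z+\mathbb{R}^m_{\geq0}$. *)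

theory Defs
  imports "HOL-Analysis.Analysis"
begin

text \<open>Vectors in R^m are modelled as real ^ 'm, the index set M = {1..m} being UNIV :: 'm set.\<close>

definition le_on :: "'m set \<Rightarrow> real^'m \<Rightarrow> real^'m \<Rightarrow> bool" where
  "le_on I y y' \<longleftrightarrow> (\<forall>i\<in>I. y$i \<le> y'$i)"

definition lt_on :: "'m set \<Rightarrow> real^'m \<Rightarrow> real^'m \<Rightarrow> bool" where
  "lt_on I y y' \<longleftrightarrow> (\<forall>i\<in>I. y$i < y'$i)"

definition lneq_on :: "'m set \<Rightarrow> real^'m \<Rightarrow> real^'m \<Rightarrow> bool" where
  "lneq_on I y y' \<longleftrightarrow> le_on I y y' \<and> (\<exists>j\<in>I. y$j < y'$j)"

definition MI :: "'m set \<Rightarrow> (real^'m) set \<Rightarrow> (real^'m) set" where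
  "MI I Y = {y'\<in>Y. \<not> (\<exists>y\<in>Y. lneq_on I y y')}"

definition WMI :: "'m set \<Rightarrow> (real^'m) set \<Rightarrow> (real^'m) set" where
  "WMI I Y = {y'\<in>Y. \<not> (\<exists>y\<in>Y. lt_on I y y')}"

definition Eff :: "(real^'m) set \<Rightarrow> (real^'m) set" where
  "Eff Y = MI UNIV Y"

definition WEff :: "(real^'m) set \<Rightarrow> (real^'m) set" where
  "WEff Y = WMI UNIV Y"

definition nonneg_orthant :: "(real^'m) set" where
  "nonneg_orthant = {x. \<forall>i. 0 \<le> x$i}"

definition free_disposal_hull :: "(real^'m) set \<Rightarrow> (real^'m) set" where
  "free_disposal_hull Z = {z + d | z d. z \<in> Z \<and> d \<in> nonneg_orthant}"

end

theory Submission
  imports Defs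
begin

lemma eps_lim: fixes c d :: real assumes "\<And>e. e > 0 \<Longrightarrow> 0 \<le> c + e * d" shows "0 \<le> c"
proof (rule ccontr)
  assume c: "\<not> 0 \<le> c"
  show False
  proof (cases "d \<le> 0")
    case True then show False using assms[of 1] c by simp
  next
    case False
    have p: "-c/(2*d) > 0" using c False by (simp add: divide_neg_pos)
    have "0 \<le> c + (-c/(2*d)) * d" using assms[OF p] by simp
    moreover have "(-c/(2*d)) * d = -c/2" using False by (simp add: field_simps)
    ultimately show False using c by simp
  qed
qed

lemma t_lim: fixes c d :: real assumes "\<And>t. t > 0 \<Longrightarrow> 0 \<le> c + t * d" shows "0 \<le> d"
proof (rule ccontr)
  assume d: "\<not> 0 \<le> d"
  have p: "(\<bar>c\<bar>+1)/(-d) > 0" using d by (simp add: divide_pos_neg)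
  have "0 \<le> c + ((\<bar>c\<bar>+1)/(-d)) * d" using assms[OF p] by simp
  moreover have "((\<bar>c\<bar>+1)/(-d)) * d = -(\<bar>c\<bar>+1)" using d by (simp add: field_simps)
  ultimately show False by linarith
qed

lemma Eff_sub_WEff: "Eff Y \<subseteq> WEff Y"
  unfolding Eff_def WEff_def MI_def WMI_def lneq_on_def lt_on_def le_on_def
  by (auto, meson less_imp_le)

lemma MI_sub_WEff: assumes "I \<noteq> {}" shows "MI I Y \<subseteq> WEff Y"
  using assms unfolding WEff_def MI_def WMI_def lneq_on_def lt_on_def le_on_def
  by (auto, meson all_not_in_conv less_imp_le)

theorem theorem2p1:
  fixes Y :: "(real^'m) set"
  assumes "convex (free_disposal_hull Y)"
  shows "WEff Y = Eff Y \<longleftrightarrow> (\<Union>I\<in>{I. I \<noteq> {}}. MI I Y) \<subseteq> Eff Y"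
proof
  assume "WEff Y = Eff Y"
  then show "(\<Union>I\<in>{I. I \<noteq> {}}. MI I Y) \<subseteq> Eff Y" using MI_sub_WEff by blast
next
  assume beta: "(\<Union>I\<in>{I. I \<noteq> {}}. MI I Y) \<subseteq> Eff Y"
  let ?Z = "free_disposal_hull Y"
  have YZ: "y' \<in> ?Z" if "y' \<in> Y" for y'
    unfolding free_disposal_hull_def nonneg_orthant_def
  proof -
    have "y' = y' + 0 \<and> y' \<in> Y \<and> (0::real^'m) \<in> {x. \<forall>i. 0 \<le> x$i}" using that by simp
    then show "y' \<in> {z + d |z d. z \<in> Y \<and> d \<in> {x. \<forall>i. 0 \<le> x $ i}}" by blast
  qed
  have "WEff Y \<subseteq> Eff Y"
  proof
    fix y assume yW: "y \<in> WEff Y"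
    define D where "D = {x. \<exists>z\<in>?Z. \<forall>i. z$i - y$i < x$i}"
    have "0 \<notin> D"
    proof
      assume "0 \<in> D"
      then obtain z where z: "z \<in> ?Z" "\<forall>i. z$i < y$i" unfolding D_def by auto
      then obtain y' d where "z = y' + d" "y' \<in> Y" "\<forall>i. 0 \<le> d$i"
        unfolding free_disposal_hull_def nonneg_orthant_def by auto
      then have "y' \<in> Y" "lt_on UNIV y' y" using z unfolding lt_on_def
        by (auto, smt (verit) vector_add_component)
      then show False using yW unfolding WEff_def WMI_def by auto
    qed
    moreover have "convex D"
      unfolding convex_def
    proof (intro ballI allI impI)
      fix x1 x2 and u v :: real
      assume "x1 \<in> D" "x2 \<in> D" "0 \<le> u" "0 \<le> v" "u + v = 1"
      then obtain z1 z2 where z: "z1 \<in> ?Z" "z2 \<in> ?Z" "\<forall>i. z1$i - y$i < x1$i" "\<forall>i. z2$i - y$i < x2$i"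
        unfolding D_def by auto
      have "u *\<^sub>R z1 + v *\<^sub>R z2 \<in> ?Z" using assms z(1,2) \<open>0 \<le> u\<close> \<open>0 \<le> v\<close> \<open>u+v=1\<close>
        by (simp add: convexD)
      moreover have "\<forall>i. (u *\<^sub>R z1 + v *\<^sub>R z2)$i - y$i < (u *\<^sub>R x1 + v *\<^sub>R x2)$i"
      proof
        fix i
        have a: "z1$i - y$i < x1$i" "z2$i - y$i < x2$i" using z by auto
        have "u * (z1$i - y$i) \<le> u * x1$i" "v * (z2$i - y$i) \<le> v * x2$i"
          using a \<open>0 \<le> u\<close> \<open>0 \<le> v\<close> by (auto intro: mult_left_mono)
        moreover have "u * (z1$i - y$i) < u * x1$i \<or> v * (z2$i - y$i) < v * x2$i"
          using a \<open>0 \<le> u\<close> \<open>0 \<le> v\<close> \<open>u+v=1\<close>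
          by (cases "u = 0") auto
        moreover have "y$i = u * y$i + v * y$i" using \<open>u+v=1\<close> by (metis distrib_right mult_1)
        ultimately show "(u *\<^sub>R z1 + v *\<^sub>R z2)$i - y$i < (u *\<^sub>R x1 + v *\<^sub>R x2)$i"
          using \<open>u+v=1\<close> by (simp add: algebra_simps) (smt (verit))
      qed
      ultimately show "u *\<^sub>R x1 + v *\<^sub>R x2 \<in> D" unfolding D_def by blast
    qed
    ultimately obtain a :: "real^'m" where a: "a \<noteq> 0" "\<forall>x\<in>D. 0 \<le> inner a x"
      using separating_hyperplane_set_0 by blast
    have yY: "y \<in> Y" using yW unfolding WEff_def WMI_def by auto
    have inD: "y' - y + e *\<^sub>R vec 1 + t *\<^sub>R axis i 1 \<in> D"
      if "y' \<in> Y" "e > 0" "t \<ge> 0" for y' e t i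
      unfolding D_def
    proof (intro CollectI bexI[of _ y'] allI)
      fix j
      show "y'$j - y$j < (y' - y + e *\<^sub>R vec 1 + t *\<^sub>R axis i 1)$j"
        using that by (simp add: axis_def)
    qed (use that YZ in auto)
    have apos: "0 \<le> a$i" for i
    proof (rule t_lim)
      fix t :: real assume "t > 0"
      then have "0 \<le> inner a (y - y + 1 *\<^sub>R vec 1 + t *\<^sub>R axis i 1)" using a(2) inD[OF yY, of 1 t i] by auto
      then show "0 \<le> inner a (vec 1) + t * a$i" by (simp add: inner_add_right inner_axis)
    qed
    have amin: "0 \<le> inner a (y' - y)" if "y' \<in> Y" for y'
    proof (rule eps_lim)
      fix e :: real assume "e > 0"
      then have "0 \<le> inner a (y' - y + e *\<^sub>R vec 1 + 0 *\<^sub>R axis undefined 1)" using a(2) inD[OF that, of e 0] by auto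
      then show "0 \<le> inner a (y' - y) + e * inner a (vec 1)" by (simp add: inner_add_right)
    qed
    define I where "I = {i. 0 < a$i}"
    have "I \<noteq> {}"
    proof
      assume "I = {}"
      then have "a$i = 0" for i using apos[of i] unfolding I_def by (metis (mono_tags, lifting) empty_Collect_eq order_neq_le_trans)
      then show False using a(1) by (simp add: vec_eq_iff)
    qed
    moreover have "y \<in> MI I Y"
      unfolding MI_def
    proof (intro CollectI conjI yY notI)
      assume "\<exists>y'\<in>Y. lneq_on I y' y"
      then obtain y' j where y': "y' \<in> Y" "\<forall>i\<in>I. y'$i \<le> y$i" "j \<in> I" "y'$j < y$j"
        unfolding lneq_on_def le_on_def by auto
      have "(\<Sum>i\<in>UNIV. a$i * (y' - y)$i) < (\<Sum>i\<in>(UNIV::'m set). 0)"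
      proof (rule sum_strict_mono_ex1[where g="\<lambda>i. 0"])
        show "\<forall>i\<in>UNIV. a$i * (y' - y)$i \<le> 0"
        proof
          fix i :: 'm
          show "a$i * (y' - y)$i \<le> 0"
          proof (cases "i \<in> I")
            case True then show ?thesis using y'(2) unfolding I_def
              by (simp add: mult_nonneg_nonpos)
          next
            case False then have "a$i = 0" using apos[of i] unfolding I_def by (metis (mono_tags, lifting) mem_Collect_eq order_neq_le_trans)
            then show ?thesis by simp
          qed
        qed
        show "\<exists>i\<in>UNIV. a$i * (y' - y)$i < 0"
          using y'(3,4) unfolding I_def by (auto intro!: bexI[of _ j] mult_pos_neg)
      qed simp
      then have "inner a (y' - y) < 0" by (simp add: inner_vec_def)
      then show False using amin[OF y'(1)] by simp
    qed
    ultimately show "y \<in> Eff Y" using beta by blast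
  qed
  then show "WEff Y = Eff Y" using Eff_sub_WEff by blast
qed

end
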